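(* For the dynamical network $N=F\circ T$, let $L=\max_{i\in\mathcal{I}}L_i$. If $L\rho(\Lambda)<1$, then $N$ has a globally attracting fixed point; that is, the interaction $F$ stabilizes the local systems $(T,X)$ if $L\ge 1$, and maintains their stability if $L<1$.
   Context: Let $\mathcal{I}=\{1,\dots,n\}$. For each $i\in\mathcal{I}$ let $(X_i,d)$ be a compact metric space and $T_i:X_i\to X_i$ with $L_i=\sup_{x_i\ne y_i}\frac{d(T_i(x_i),T_i(y_i))}{d(x_i,y_i)}<\infty$. $X=\prod_iX_i$ with $d_{\max}(x,y)=\max_id(x_i,y_i)$, and $T$ the product map $T(x)_i=T_i(x_i)$. A map $F:X\to X$ is an interaction if for every $j$ there are a nonempty $\mathcal{I}_j\subseteq\mathcal{I}$, a continuous $F_j:\prod_{i\in\mathcal{I}_j}X_i\to X_j$ with $F(x)_j=F_j(\{x_i\}_{i\in\mathcal{I}_j})$, and constants $\Lambda_{ij}\ge0$ with $d(F_j(\{x_i\}),F_j(\{y_i\}))\le\sum_{i\in\mathcal{I}_j}\Lambda_{ij}d(x_i,y_i)$; $\Lambda_{ij}=0$ for $i\notin\mathcal{I}_j$; $\Lambda=(\Lambda_{ij})$. The dynamical network is $N=F\circ T$. A globally attracting fixed point is a point $\tilde x\in X$ with $N^k(y)\to\tilde x$ for all $y\in X$. $F$ stabilizes $(T,X)$ if $\max_iL_i\ge1$ and $N$ has a globally attracting fixed point; $F$ maintains the stability of $(T,X)$ if $\max_iL_i<1$ and $N$ has a globally attracting fixed point. $\rho$ denotes spectral radius. *)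

theory Defs
  imports Complex_Main "Jordan_Normal_Form.Spectral_Radius"
begin

text \<open>Index set I = {0..<n} (the paper's {1..n}, shifted). Each local space X i is a subset
  of a common metric space type 'a; a point of the product X is a function in
  PiE {..<n} X (value undefined outside the index set).\<close>

definition prod_space :: "nat \<Rightarrow> (nat \<Rightarrow> 'a set) \<Rightarrow> (nat \<Rightarrow> 'a) set" where
  "prod_space n X = PiE {..<n} X"

definition dmax :: "nat \<Rightarrow> (nat \<Rightarrow> 'a::metric_space) \<Rightarrow> (nat \<Rightarrow> 'a) \<Rightarrow> real" where
  "dmax n x y = Max (insert 0 ((\<lambda>i. dist (x i) (y i)) ` {..<n}))"

text \<open>Lipschitz constant L_i = sup of the difference quotients (0 if there are no two
  distinct points).\<close>
definition lip_const :: "'a::metric_space set \<Rightarrow> ('a \<Rightarrow> 'a) \<Rightarrow> real" where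
  "lip_const S f = Sup (insert 0 {dist (f x) (f y) / dist x y | x y. x \<in> S \<and> y \<in> S \<and> x \<noteq> y})"

definition lip_finite :: "'a::metric_space set \<Rightarrow> ('a \<Rightarrow> 'a) \<Rightarrow> bool" where
  "lip_finite S f = bdd_above {dist (f x) (f y) / dist x y | x y. x \<in> S \<and> y \<in> S \<and> x \<noteq> y}"

definition product_map :: "nat \<Rightarrow> (nat \<Rightarrow> 'a \<Rightarrow> 'a) \<Rightarrow> (nat \<Rightarrow> 'a) \<Rightarrow> (nat \<Rightarrow> 'a)" where
  "product_map n T x = (\<lambda>i. if i < n then T i (x i) else undefined)"

text \<open>F given componentwise: F j x is the j-th component of F(x).\<close>
definition interaction_map :: "nat \<Rightarrow> (nat \<Rightarrow> (nat \<Rightarrow> 'a) \<Rightarrow> 'a) \<Rightarrow> (nat \<Rightarrow> 'a) \<Rightarrow> (nat \<Rightarrow> 'a)" where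
  "interaction_map n F x = (\<lambda>j. if j < n then F j x else undefined)"

definition is_interaction ::
  "nat \<Rightarrow> (nat \<Rightarrow> 'a::metric_space set) \<Rightarrow> (nat \<Rightarrow> (nat \<Rightarrow> 'a) \<Rightarrow> 'a)
   \<Rightarrow> (nat \<Rightarrow> nat set) \<Rightarrow> (nat \<Rightarrow> nat \<Rightarrow> real) \<Rightarrow> bool" where
  "is_interaction n X F Ij Lam \<longleftrightarrow>
     (\<forall>j<n.
        Ij j \<noteq> {} \<and> Ij j \<subseteq> {..<n} \<and>
        (\<forall>x\<in>prod_space n X. F j x \<in> X j) \<and>
        (\<forall>x\<in>prod_space n X. \<forall>y\<in>prod_space n X. (\<forall>i\<in>Ij j. x i = y i) \<longrightarrow> F j x = F j y) \<and>
        (\<forall>x\<in>prod_space n X. \<forall>e>0. \<exists>d>0. \<forall>y\<in>prod_space n X.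
            dmax n x y < d \<longrightarrow> dist (F j x) (F j y) < e) \<and>
        (\<forall>x\<in>prod_space n X. \<forall>y\<in>prod_space n X.
            dist (F j x) (F j y) \<le> (\<Sum>i\<in>Ij j. Lam i j * dist (x i) (y i))) \<and>
        (\<forall>i<n. Lam i j \<ge> 0 \<and> (i \<notin> Ij j \<longrightarrow> Lam i j = 0)))"

definition Lam_mat :: "nat \<Rightarrow> (nat \<Rightarrow> nat \<Rightarrow> real) \<Rightarrow> complex mat" where
  "Lam_mat n Lam = Matrix.mat n n (\<lambda>(i, j). complex_of_real (Lam i j))"

definition globally_attracting_fixed_point ::
  "nat \<Rightarrow> (nat \<Rightarrow> 'a::metric_space set) \<Rightarrow> ((nat \<Rightarrow> 'a) \<Rightarrow> (nat \<Rightarrow> 'a)) \<Rightarrow> (nat \<Rightarrow> 'a) \<Rightarrow> bool" where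
  "globally_attracting_fixed_point n X N xt \<longleftrightarrow>
     xt \<in> prod_space n X \<and>
     (\<forall>y\<in>prod_space n X. (\<lambda>k. dmax n ((N ^^ k) y) xt) \<longlonglongrightarrow> 0)"

definition has_gafp :: "nat \<Rightarrow> (nat \<Rightarrow> 'a::metric_space set) \<Rightarrow> ((nat \<Rightarrow> 'a) \<Rightarrow> (nat \<Rightarrow> 'a)) \<Rightarrow> bool" where
  "has_gafp n X N \<longleftrightarrow> (\<exists>xt. globally_attracting_fixed_point n X N xt)"

definition max_lip :: "nat \<Rightarrow> (nat \<Rightarrow> 'a::metric_space set) \<Rightarrow> (nat \<Rightarrow> 'a \<Rightarrow> 'a) \<Rightarrow> real" where
  "max_lip n X T = Max ((\<lambda>i. lip_const (X i) (T i)) ` {..<n})"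

definition stabilizes where
  "stabilizes n X T F \<longleftrightarrow> max_lip n X T \<ge> 1 \<and> has_gafp n X (interaction_map n F \<circ> product_map n T)"

definition maintains_stability where
  "maintains_stability n X T F \<longleftrightarrow> max_lip n X T < 1 \<and> has_gafp n X (interaction_map n F \<circ> product_map n T)"

end

theory Submission imports Defs "HOL-Analysis.Elementary_Metric_Spaces" begin

lemma dist_le_dmax: "i < n \<Longrightarrow> dist (x i) (y i) \<le> dmax n x y"
  unfolding dmax_def by (intro Max_ge) auto

lemma dmax_le: "0 \<le> B \<Longrightarrow> (\<And>i. i < n \<Longrightarrow> dist (x i) (y i) \<le> B) \<Longrightarrow> dmax n x y \<le> B"
  unfolding dmax_def by (subst Max_le_iff) auto

lemma dmax_nonneg: "0 \<le> dmax n x y"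
  unfolding dmax_def by (intro Max_ge) auto

fun mpow :: "nat \<Rightarrow> (nat \<Rightarrow> nat \<Rightarrow> real) \<Rightarrow> nat \<Rightarrow> nat \<Rightarrow> nat \<Rightarrow> real" where
  "mpow n M 0 i j = (if i = j then 1 else 0)"
| "mpow n M (Suc k) i j = (\<Sum>l<n. mpow n M k i l * M l j)"

lemma Lam_mat_carrier: "Lam_mat n M \<in> carrier_mat n n"
  unfolding Lam_mat_def by simp

lemma Lam_mat_pow: "Lam_mat n M ^\<^sub>m k = Matrix.mat n n (\<lambda>(i,j). complex_of_real (mpow n M k i j))"
proof (induction k)
  case 0
  show ?case by (rule eq_matI) (auto simp: Lam_mat_def)
next
  case (Suc k)
  show ?case
  proof (rule eq_matI)
    fix i j assume ij: "i < dim_row (Matrix.mat n n (\<lambda>(i,j). complex_of_real (mpow n M (Suc k) i j)))"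
      "j < dim_col (Matrix.mat n n (\<lambda>(i,j). complex_of_real (mpow n M (Suc k) i j)))"
    hence i: "i < n" and j: "j < n" by auto
    have "(Lam_mat n M ^\<^sub>m Suc k) $$ (i,j) = (\<Sum>l\<in>{0..<n}. complex_of_real (mpow n M k i l) * complex_of_real (M l j))"
      using i j by (simp only: pow_mat.simps Suc.IH) (simp add: scalar_prod_def Lam_mat_def)
    also have "\<dots> = complex_of_real (mpow n M (Suc k) i j)"
      by (simp add: lessThan_atLeast0)
    finally show "(Lam_mat n M ^\<^sub>m Suc k) $$ (i,j) = Matrix.mat n n (\<lambda>(i,j). complex_of_real (mpow n M (Suc k) i j)) $$ (i,j)"
      using i j by simp
  qed (auto simp: Lam_mat_def)
qed

lemma spec_scale:
  assumes n: "n > 0" and s: "s > 0"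
  shows "spectral_radius (Lam_mat n (\<lambda>i j. s * M i j)) \<le> s * spectral_radius (Lam_mat n M)"
proof -
  let ?A = "Lam_mat n M" and ?B = "Lam_mat n (\<lambda>i j. s * M i j)"
  have A: "?A \<in> carrier_mat n n" and B: "?B \<in> carrier_mat n n" by (auto simp: Lam_mat_carrier)
  obtain mu where mu: "mu \<in> spectrum ?B" and eq: "spectral_radius ?B = norm mu"
    using spectral_radius_mem_max(1)[OF B n] by auto
  from mu obtain v where ev: "eigenvector ?B v mu" unfolding spectrum_def eigenvalue_def by auto
  hence v: "v \<in> carrier_vec n" "v \<noteq> 0\<^sub>v n" "?B *\<^sub>v v = mu \<cdot>\<^sub>v v"
    unfolding eigenvector_def using B by auto
  have "?A *\<^sub>v v = (mu / complex_of_real s) \<cdot>\<^sub>v v"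
  proof (rule eq_vecI)
    fix i assume "i < dim_vec ((mu / complex_of_real s) \<cdot>\<^sub>v v)"
    hence i: "i < n" using v by auto
    have "(?B *\<^sub>v v) $ i = complex_of_real s * (?A *\<^sub>v v) $ i"
      using i v(1) by (simp add: Lam_mat_def scalar_prod_def sum_distrib_left mult.assoc)
    hence "complex_of_real s * (?A *\<^sub>v v) $ i = mu * v $ i" using v i by (metis index_smult_vec(1) carrier_vecD)
    thus "(?A *\<^sub>v v) $ i = ((mu / complex_of_real s) \<cdot>\<^sub>v v) $ i"
      using i v s by (simp add: field_simps)
  qed (use v A in auto)
  hence "eigenvector ?A v (mu / complex_of_real s)" unfolding eigenvector_def using v A by auto
  hence "norm (mu / complex_of_real s) \<in> norm ` spectrum ?A" unfolding spectrum_def eigenvalue_def by auto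
  from spectral_radius_mem_max(2)[OF A n this]
  have "norm mu / s \<le> spectral_radius ?A" using s by (simp add: norm_divide)
  thus ?thesis using eq s by (simp add: field_simps)
qed

lemma squeeze0:
  fixes a b :: "nat \<Rightarrow> real"
  assumes "\<And>k. 0 \<le> a k" "\<And>k. a k \<le> b k" "b \<longlonglongrightarrow> 0"
  shows "a \<longlonglongrightarrow> 0"
  by (rule tendsto_sandwich[of "\<lambda>_. 0" a sequentially b]) (use assms in auto)

lemma dmax_le_sum: "dmax n a b \<le> (\<Sum>i<n. dist (a i) (b i))"
  by (rule dmax_le) (auto intro: sum_nonneg member_le_sum)

lemma dmax_tendsto:
  assumes "\<And>i. i < n \<Longrightarrow> (\<lambda>k. f k i) \<longlonglongrightarrow> g i"
  shows "(\<lambda>k. dmax n (f k) g) \<longlonglongrightarrow> 0"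
proof (rule squeeze0[OF dmax_nonneg dmax_le_sum])
  show "(\<lambda>k. \<Sum>i<n. dist (f k i) (g i)) \<longlonglongrightarrow> 0"
    by (rule tendsto_null_sum) (use assms in \<open>auto simp: tendsto_dist_iff[symmetric]\<close>)
qed

theorem corollary1:
  fixes n :: nat
    and X :: "nat \<Rightarrow> 'a::metric_space set"
    and T :: "nat \<Rightarrow> 'a \<Rightarrow> 'a"
    and F :: "nat \<Rightarrow> (nat \<Rightarrow> 'a) \<Rightarrow> 'a"
    and Ij :: "nat \<Rightarrow> nat set"
    and Lam :: "nat \<Rightarrow> nat \<Rightarrow> real"
  assumes n_pos: "n > 0"
    and X_nonempty: "\<And>i. i < n \<Longrightarrow> X i \<noteq> {}"
    and X_compact: "\<And>i. i < n \<Longrightarrow> compact (X i)"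
    and T_maps: "\<And>i. i < n \<Longrightarrow> T i ` X i \<subseteq> X i"
    and T_lip: "\<And>i. i < n \<Longrightarrow> lip_finite (X i) (T i)"
    and F_int: "is_interaction n X F Ij Lam"
    and contr: "max_lip n X T * spectral_radius (Lam_mat n Lam) < 1"
  shows "has_gafp n X (interaction_map n F \<circ> product_map n T)
       \<and> (max_lip n X T \<ge> 1 \<longrightarrow> stabilizes n X T F)
       \<and> (max_lip n X T < 1 \<longrightarrow> maintains_stability n X T F)"
proof -
  define L where "L = max_lip n X T"
  define \<rho> where "\<rho> = spectral_radius (Lam_mat n Lam)"
  have lc_le: "lip_const (X i) (T i) \<le> L" if "i < n" for i
    unfolding L_def max_lip_def using that by (intro Max_ge) auto
  have bdd: "bdd_above (insert 0 {dist (T i x) (T i y) / dist x y | x y. x \<in> X i \<and> y \<in> X i \<and> x \<noteq> y})"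
    if "i < n" for i
    using T_lip[OF that] unfolding lip_finite_def by simp
  have lc_nonneg: "0 \<le> lip_const (X i) (T i)" if "i < n" for i
    unfolding lip_const_def by (rule cSup_upper[OF _ bdd[OF that]]) simp
  have L0: "0 \<le> L" using lc_nonneg[OF n_pos] lc_le[OF n_pos] by linarith
  have lipT: "dist (T i x) (T i y) \<le> L * dist x y" if i: "i < n" and x: "x \<in> X i" and y: "y \<in> X i" for i x y
  proof (cases "x = y")
    case False
    have "dist (T i x) (T i y) / dist x y \<le> lip_const (X i) (T i)"
      unfolding lip_const_def by (rule cSup_upper[OF _ bdd[OF i]]) (use x y False in blast)
    also have "\<dots> \<le> L" by (rule lc_le[OF i])
    finally show ?thesis using False by (simp add: divide_le_eq)
  qed simp
  have rho0: "0 \<le> \<rho>"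
    using spectral_radius_mem_max(1)[OF Lam_mat_carrier[of n Lam] n_pos] unfolding \<rho>_def by auto
  obtain s where s0: "s > 0" and srho: "s * \<rho> < 1" and Ls: "L < s"
  proof (cases "\<rho> = 0")
    case True thus ?thesis using that[of "L + 1"] L0 by auto
  next
    case False
    hence rp: "\<rho> > 0" using rho0 by auto
    have Lr: "L * \<rho> < 1" using contr unfolding L_def \<rho>_def .
    hence "L < 1 / \<rho>" using rp by (simp add: field_simps)
    show ?thesis
    proof (rule that[of "(L + 1 / \<rho>) / 2"])
      have "0 < 1 / \<rho>" using rp by simp
      thus "0 < (L + 1 / \<rho>) / 2" using L0 by (intro divide_pos_pos add_nonneg_pos) auto
      show "(L + 1 / \<rho>) / 2 * \<rho> < 1" using Lr rp by (simp add: field_simps)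
      show "L < (L + 1 / \<rho>) / 2" using \<open>L < 1 / \<rho>\<close> by simp
    qed
  qed
  define Lam' where "Lam' = (\<lambda>i j. s * Lam i j)"
  define r where "r = L / s"
  have r0: "0 \<le> r" and r1: "r < 1" using L0 s0 Ls unfolding r_def by (auto simp: field_simps)
  have "spectral_radius (Lam_mat n Lam') < 1"
    using spec_scale[OF n_pos s0, of Lam] srho unfolding Lam'_def \<rho>_def by simp
  from spectral_radius_jnf_norm_bound_less_1_upper_triangular[OF Lam_mat_carrier this]
  obtain C where C: "\<And>k. norm_bound (Lam_mat n Lam' ^\<^sub>m k) C" by auto
  have Cb: "\<bar>mpow n Lam' k i j\<bar> \<le> C" if "i < n" "j < n" for k i j
    using C[of k] that unfolding norm_bound_def Lam_mat_pow by auto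
  have C0: "0 \<le> C" using Cb[OF n_pos n_pos, of 0] by simp
  define S where "S = prod_space n X"
  define N where "N = interaction_map n F \<circ> product_map n T"
  have Fj: "Ij j \<noteq> {} \<and> Ij j \<subseteq> {..<n} \<and>
        (\<forall>x\<in>S. F j x \<in> X j) \<and>
        (\<forall>x\<in>S. \<forall>y\<in>S. dist (F j x) (F j y) \<le> (\<Sum>i\<in>Ij j. Lam i j * dist (x i) (y i))) \<and>
        (\<forall>i<n. Lam i j \<ge> 0 \<and> (i \<notin> Ij j \<longrightarrow> Lam i j = 0))" if "j < n" for j
    using F_int that unfolding is_interaction_def S_def by blast
  have PT: "product_map n T x \<in> S" if "x \<in> S" for x
    using that T_maps unfolding S_def prod_space_def product_map_def PiE_iff by (auto simp: extensional_def)
  have N_in: "N x \<in> S" if "x \<in> S" for x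
    using Fj PT[OF that] unfolding N_def interaction_map_def
    by (auto simp: extensional_def S_def prod_space_def PiE_iff)
  have Nk_in: "(N ^^ k) x \<in> S" if "x \<in> S" for x k
    by (induction k) (use that N_in in auto)
  have step: "dist (N x j) (N y j) \<le> (\<Sum>i<n. r * Lam' i j * dist (x i) (y i))"
    if x: "x \<in> S" and y: "y \<in> S" and j: "j < n" for x y j
  proof -
    have "dist (N x j) (N y j) = dist (F j (product_map n T x)) (F j (product_map n T y))"
      using j by (simp add: N_def interaction_map_def)
    also have "\<dots> \<le> (\<Sum>i\<in>Ij j. Lam i j * dist (product_map n T x i) (product_map n T y i))"
      using Fj[OF j] PT[OF x] PT[OF y] by blast
    also have "\<dots> \<le> (\<Sum>i\<in>Ij j. Lam i j * (L * dist (x i) (y i)))"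
    proof (rule sum_mono)
      fix i assume i: "i \<in> Ij j"
      hence i': "i < n" using Fj[OF j] by blast
      have "x i \<in> X i" "y i \<in> X i" using x y i' unfolding S_def prod_space_def by auto
      hence "dist (product_map n T x i) (product_map n T y i) \<le> L * dist (x i) (y i)"
        using lipT[OF i'] i' by (simp add: product_map_def)
      thus "Lam i j * dist (product_map n T x i) (product_map n T y i) \<le> Lam i j * (L * dist (x i) (y i))"
        using Fj[OF j] i' by (intro mult_left_mono) auto
    qed
    also have "\<dots> = (\<Sum>i<n. Lam i j * (L * dist (x i) (y i)))"
      by (rule sum.mono_neutral_left) (use Fj[OF j] in auto)
    also have "\<dots> = (\<Sum>i<n. r * Lam' i j * dist (x i) (y i))"
      using s0 by (simp add: r_def Lam'_def mult_ac)
    finally show ?thesis .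
  qed
  have Lam'0: "0 \<le> Lam' i j" if "i < n" "j < n" for i j
    using Fj[OF that(2)] that s0 unfolding Lam'_def by auto
  have iter: "\<forall>j<n. dist ((N ^^ k) x j) ((N ^^ k) y j) \<le> r ^ k * (\<Sum>i<n. mpow n Lam' k i j * dist (x i) (y i))"
    if x: "x \<in> S" and y: "y \<in> S" for x y k
  proof (induction k)
    case 0
    show ?case
    proof (intro allI impI)
      fix j assume j: "j < n"
      have "(\<Sum>i<n. mpow n Lam' 0 i j * dist (x i) (y i)) = dist (x j) (y j)"
        using j by (subst sum.cong[OF refl, of _ _ "\<lambda>i. if j = i then dist (x i) (y i) else 0"]) auto
      thus "dist ((N ^^ 0) x j) ((N ^^ 0) y j) \<le> r ^ 0 * (\<Sum>i<n. mpow n Lam' 0 i j * dist (x i) (y i))"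
        by simp
    qed
  next
    case (Suc k)
    show ?case
    proof (intro allI impI)
      fix j assume j: "j < n"
      have "dist ((N ^^ Suc k) x j) ((N ^^ Suc k) y j) = dist (N ((N ^^ k) x) j) (N ((N ^^ k) y) j)" by simp
      also have "\<dots> \<le> (\<Sum>l<n. r * Lam' l j * dist ((N ^^ k) x l) ((N ^^ k) y l))"
        by (rule step[OF Nk_in[OF x] Nk_in[OF y] j])
      also have "\<dots> \<le> (\<Sum>l<n. r * Lam' l j * (r ^ k * (\<Sum>i<n. mpow n Lam' k i l * dist (x i) (y i))))"
        using Suc.IH r0 Lam'0 j by (intro sum_mono mult_left_mono) auto
      also have "\<dots> = r ^ Suc k * (\<Sum>i<n. mpow n Lam' (Suc k) i j * dist (x i) (y i))"
      proof -
        have e1: "(\<Sum>l<n. r * Lam' l j * (r ^ k * (\<Sum>i<n. mpow n Lam' k i l * dist (x i) (y i))))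
             = r ^ Suc k * (\<Sum>l<n. \<Sum>i<n. mpow n Lam' k i l * Lam' l j * dist (x i) (y i))"
          by (simp add: sum_distrib_left mult_ac)
        have e2: "(\<Sum>l<n. \<Sum>i<n. mpow n Lam' k i l * Lam' l j * dist (x i) (y i))
             = (\<Sum>i<n. \<Sum>l<n. mpow n Lam' k i l * Lam' l j * dist (x i) (y i))"
          by (rule sum.swap)
        have e3: "(\<Sum>i<n. \<Sum>l<n. mpow n Lam' k i l * Lam' l j * dist (x i) (y i))
             = (\<Sum>i<n. mpow n Lam' (Suc k) i j * dist (x i) (y i))"
          by (simp only: mpow.simps sum_distrib_right)
        show ?thesis using e1 e2 e3 by simp
      qed
      finally show "dist ((N ^^ Suc k) x j) ((N ^^ Suc k) y j) \<le> r ^ Suc k * (\<Sum>i<n. mpow n Lam' (Suc k) i j * dist (x i) (y i))" .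
    qed
  qed
  define K where "K = real n * C"
  have K0: "0 \<le> K" using C0 by (simp add: K_def)
  have contraction: "dmax n ((N ^^ k) x) ((N ^^ k) y) \<le> K * r ^ k * dmax n x y"
    if x: "x \<in> S" and y: "y \<in> S" for x y k
  proof (rule dmax_le)
    show "0 \<le> K * r ^ k * dmax n x y" using K0 r0 dmax_nonneg[of n x y] by simp
    fix j assume j: "j < n"
    have "(\<Sum>i<n. mpow n Lam' k i j * dist (x i) (y i)) \<le> (\<Sum>i<n. C * dmax n x y)"
    proof (rule sum_mono)
      fix i assume i: "i \<in> {..<n}"
      have "mpow n Lam' k i j * dist (x i) (y i) \<le> \<bar>mpow n Lam' k i j\<bar> * dist (x i) (y i)"
        by (intro mult_right_mono) auto
      also have "\<dots> \<le> C * dmax n x y"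
        using Cb[of i j k] i j dist_le_dmax[of i n x y] C0 by (intro mult_mono) auto
      finally show "mpow n Lam' k i j * dist (x i) (y i) \<le> C * dmax n x y" .
    qed
    also have "\<dots> = K * dmax n x y" by (simp add: K_def)
    finally have "r ^ k * (\<Sum>i<n. mpow n Lam' k i j * dist (x i) (y i)) \<le> r ^ k * (K * dmax n x y)"
      using r0 by (intro mult_left_mono) auto
    have "dist ((N ^^ k) x j) ((N ^^ k) y j) \<le> r ^ k * (K * dmax n x y)"
      by (rule order_trans[OF _ \<open>r ^ k * _ \<le> _\<close>]) (use iter[OF x y, of k] j in blast)
    thus "dist ((N ^^ k) x j) ((N ^^ k) y j) \<le> K * r ^ k * dmax n x y" by (simp add: mult_ac)
  qed
  have "S \<noteq> {}" using X_nonempty unfolding S_def prod_space_def PiE_eq_empty_iff by blast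
  then obtain x0 where x0: "x0 \<in> S" by blast
  define z where "z k = (N ^^ k) x0" for k
  define d0 where "d0 = dmax n (N x0) x0"
  have z_in: "z k \<in> S" for k unfolding z_def by (rule Nk_in[OF x0])
  have zstep: "dist (z k i) (z (Suc k) i) \<le> K * d0 * r ^ k" if i: "i < n" for k i
  proof -
    have "dist (z (Suc k) i) (z k i) \<le> dmax n ((N ^^ k) (N x0)) ((N ^^ k) x0)"
      using dist_le_dmax[OF i] unfolding z_def funpow_Suc_right by simp
    also have "\<dots> \<le> K * r ^ k * d0" unfolding d0_def by (rule contraction[OF N_in[OF x0] x0])
    finally show ?thesis by (simp add: dist_commute mult_ac)
  qed
  have K_d0: "0 \<le> K * d0" using K0 dmax_nonneg[of n "N x0" x0] unfolding d0_def by simp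
  have zbound: "dist (z m i) (z (m + p) i) \<le> K * d0 * r ^ m / (1 - r)" if i: "i < n" for m p i
  proof -
    have "dist (z m i) (z (m + p) i) \<le> (\<Sum>q<p. K * d0 * r ^ (m + q))"
    proof (induction p)
      case (Suc p)
      have "dist (z m i) (z (m + Suc p) i) \<le> dist (z m i) (z (m + p) i) + dist (z (m + p) i) (z (Suc (m + p)) i)"
        by (simp add: dist_triangle)
      also have "\<dots> \<le> (\<Sum>q<p. K * d0 * r ^ (m + q)) + K * d0 * r ^ (m + p)"
        using Suc.IH zstep[OF i, of "m + p"] by linarith
      finally show ?case by simp
    qed simp
    also have "\<dots> = K * d0 * r ^ m * (\<Sum>q<p. r ^ q)"
      by (simp add: sum_distrib_left power_add mult_ac)
    also have "\<dots> \<le> K * d0 * r ^ m * (1 / (1 - r))"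
    proof (rule mult_left_mono)
      have "(\<Sum>q<p. r ^ q) \<le> (\<Sum>q. r ^ q)"
        by (rule sum_le_suminf) (use r0 r1 in \<open>auto intro: summable_geometric\<close>)
      thus "(\<Sum>q<p. r ^ q) \<le> 1 / (1 - r)" using suminf_geometric[of r] r0 r1 by simp
      show "0 \<le> K * d0 * r ^ m" using K_d0 r0 by simp
    qed
    finally show ?thesis by simp
  qed
  have Bt: "(\<lambda>m. K * d0 * r ^ m / (1 - r)) \<longlonglongrightarrow> 0"
    using LIMSEQ_power_zero[of r] r0 r1
    by (intro tendsto_eq_intros) auto
  have zCauchy: "Cauchy (\<lambda>k. z k i)" if i: "i < n" for i
  proof (rule metric_CauchyI)
    fix e :: real assume e: "0 < e"
    from Bt e obtain M where M: "\<And>m. m \<ge> M \<Longrightarrow> \<bar>K * d0 * r ^ m / (1 - r)\<bar> < e"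
      unfolding lim_sequentially dist_real_def by force
    have "dist (z a i) (z b i) < e" if ab: "a \<ge> M" "b \<ge> M" for a b
    proof (cases "a \<le> b")
      case True
      then obtain p where "b = a + p" using le_Suc_ex by blast
      thus ?thesis using zbound[OF i, of a p] M[OF ab(1)] abs_ge_self[of "K * d0 * r ^ a / (1 - r)"]
        by (simp only:, linarith?)
    next
      case False
      then obtain p where "a = b + p" using le_Suc_ex[of b a] by auto
      thus ?thesis using zbound[OF i, of b p] M[OF ab(2)] abs_ge_self[of "K * d0 * r ^ b / (1 - r)"]
        dist_commute[of "z a i" "z b i"] by (simp only:, linarith?)
    qed
    thus "\<exists>M. \<forall>m\<ge>M. \<forall>n\<ge>M. dist (z m i) (z n i) < e" by blast
  qed
  have "\<forall>i<n. \<exists>l\<in>X i. (\<lambda>k. z k i) \<longlonglongrightarrow> l"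
  proof (intro allI impI)
    fix i assume i: "i < n"
    have "complete (X i)" by (rule compact_imp_complete[OF X_compact[OF i]])
    moreover have "\<forall>k. z k i \<in> X i" using z_in i unfolding S_def prod_space_def by auto
    ultimately show "\<exists>l\<in>X i. (\<lambda>k. z k i) \<longlonglongrightarrow> l" using zCauchy[OF i] unfolding complete_def
      by (elim allE[where x="\<lambda>k. z k i"]) blast
  qed
  then obtain w where w: "\<And>i. i < n \<Longrightarrow> w i \<in> X i \<and> (\<lambda>k. z k i) \<longlonglongrightarrow> w i" by metis
  define xt where "xt = restrict w {..<n}"
  have xt_in: "xt \<in> S" using w unfolding xt_def S_def prod_space_def by auto
  have zconv: "(\<lambda>k. z k i) \<longlonglongrightarrow> xt i" if "i < n" for i using w[OF that] that unfolding xt_def by simp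
  have Nfix: "N xt = xt"
  proof -
    have "(\<lambda>k. z (Suc k) i) \<longlonglongrightarrow> N xt i" if i: "i < n" for i
    proof -
      have "(\<lambda>k. dist (z (Suc k) i) (N xt i)) \<longlonglongrightarrow> 0"
      proof (rule squeeze0)
        show "dist (z (Suc k) i) (N xt i) \<le> K * r * dmax n (z k) xt" for k
        proof -
          have a: "dist (z (Suc k) i) (N xt i) \<le> dmax n (z (Suc k)) (N xt)" by (rule dist_le_dmax[OF i])
          have b: "z (Suc k) = N (z k)" by (simp add: z_def)
          have c: "dmax n (N (z k)) (N xt) \<le> K * r * dmax n (z k) xt"
            using contraction[OF z_in xt_in, of 1 k] by simp
          show ?thesis using a b c by simp
        qed
        show "(\<lambda>k. K * r * dmax n (z k) xt) \<longlonglongrightarrow> 0"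
        proof -
          have "(\<lambda>k. dmax n (z k) xt) \<longlonglongrightarrow> 0" by (rule dmax_tendsto) (rule zconv)
          from tendsto_mult[OF tendsto_const this, of "K * r"] show ?thesis by simp
        qed
      qed simp
      thus ?thesis by (rule iffD2[OF tendsto_dist_iff])
    qed
    moreover have "(\<lambda>k. z (Suc k) i) \<longlonglongrightarrow> xt i" if "i < n" for i
      using zconv[OF that] by (rule LIMSEQ_Suc)
    ultimately have A: "N xt i = xt i" if "i < n" for i using LIMSEQ_unique that by metis
    have B: "N xt i = xt i" if "\<not> i < n" for i
      using N_in[OF xt_in] xt_in that unfolding S_def prod_space_def by (auto simp: PiE_def extensional_def)
    show ?thesis
    proof (rule ext)
      fix i show "N xt i = xt i" using A B by (cases "i < n") auto
    qed
  qed
  have gafp: "globally_attracting_fixed_point n X N xt"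
    unfolding globally_attracting_fixed_point_def
  proof (intro conjI ballI)
    show "xt \<in> prod_space n X" using xt_in unfolding S_def .
    fix y assume y: "y \<in> prod_space n X"
    hence yS: "y \<in> S" unfolding S_def .
    show "(\<lambda>k. dmax n ((N ^^ k) y) xt) \<longlonglongrightarrow> 0"
    proof (rule squeeze0[OF dmax_nonneg])
      show "dmax n ((N ^^ k) y) xt \<le> K * r ^ k * dmax n y xt" for k
      proof -
        have "(N ^^ k) xt = xt" by (induction k) (use Nfix in auto)
        thus ?thesis using contraction[OF yS xt_in, of k] by simp
      qed
      show "(\<lambda>k. K * r ^ k * dmax n y xt) \<longlonglongrightarrow> 0"
        using LIMSEQ_power_zero[of r] r0 r1 by (intro tendsto_eq_intros) auto
    qed
  qed
  hence "has_gafp n X (interaction_map n F \<circ> product_map n T)"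
    unfolding has_gafp_def N_def by blast
  thus ?thesis unfolding stabilizes_def maintains_stability_def by blast
qed

end
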